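(* Let $n\ge 5$, let $k$ be a positive integer, let $x\in[1,n]$ and let $(i,j)$ be a cell with $i,j\in[1,n]$. There exists a Latin square of order $n$ with inner distance $k$ if and only if there exists a Latin square $(m_{a,b})$ of order $n$ with inner distance $k$ and $m_{i,j}=x$.
   Context: Symbols are $[1,n]$. For $a,b\in[1,n]$, $\mathrm{dist}(a,b)$ is the minimum of the residues of $a-b$ and $b-a$ modulo $n$ (in $[0,n-1]$). A Latin square of order $n$ is an $n\times n$ matrix over $[1,n]$ with each symbol exactly once in every row and column; its inner distance is the minimum of $\mathrm{dist}$ over symbols in horizontally or vertically adjacent cells. *)

theory Defs
  imports Main
begin

definition cdist :: "nat \<Rightarrow> nat \<Rightarrow> nat \<Rightarrow> nat" where
  "cdist n a b = nat (min ((int a - int b) mod int n) ((int b - int a) mod int n))"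

definition latin_square :: "nat \<Rightarrow> (nat \<Rightarrow> nat \<Rightarrow> nat) \<Rightarrow> bool" where
  "latin_square n M \<longleftrightarrow>
     (\<forall>a\<in>{1..n}. \<forall>s\<in>{1..n}. \<exists>!b. b \<in> {1..n} \<and> M a b = s) \<and>
     (\<forall>b\<in>{1..n}. \<forall>s\<in>{1..n}. \<exists>!a. a \<in> {1..n} \<and> M a b = s) \<and>
     (\<forall>a\<in>{1..n}. \<forall>b\<in>{1..n}. M a b \<in> {1..n})"

definition inner_distance :: "nat \<Rightarrow> (nat \<Rightarrow> nat \<Rightarrow> nat) \<Rightarrow> nat" where
  "inner_distance n M = Min
     ({cdist n (M a b) (M a (b+1)) | a b. a \<in> {1..n} \<and> b \<in> {1..n} \<and> b + 1 \<le> n} \<union>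
      {cdist n (M a b) (M (a+1) b) | a b. a \<in> {1..n} \<and> b \<in> {1..n} \<and> a + 1 \<le> n})"

end

theory Submission
  imports Defs
begin

definition sh :: "nat \<Rightarrow> int \<Rightarrow> nat \<Rightarrow> nat" where
  "sh n d s = nat ((int s - 1 + d) mod int n) + 1"

lemma sh_int: "n > 0 \<Longrightarrow> int (sh n d s) = (int s - 1 + d) mod int n + 1"
  by (simp add: sh_def)

lemma sh_range: "n > 0 \<Longrightarrow> sh n d s \<in> {1..n}"
proof -
  assume n: "n > 0"
  have "(int s - 1 + d) mod int n < int n" using n by simp
  moreover have "(int s - 1 + d) mod int n \<ge> 0" using n by simp
  ultimately have "nat ((int s - 1 + d) mod int n) < n" by linarith
  then show ?thesis by (simp add: sh_def)
qed

lemma sh_diff: assumes n: "n > 0"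
  shows "(int (sh n d a) - int (sh n d b)) mod int n = (int a - int b) mod int n"
proof -
  have "int (sh n d a) - int (sh n d b) = (int a - 1 + d) mod int n - (int b - 1 + d) mod int n"
    by (simp only: sh_int[OF n])
  then have "(int (sh n d a) - int (sh n d b)) mod int n = ((int a - 1 + d) - (int b - 1 + d)) mod int n"
    by (simp only: mod_diff_eq)
  also have "(int a - 1 + d) - (int b - 1 + d) = int a - int b" by simp
  finally show ?thesis .
qed

lemma sh_cdist: "n > 0 \<Longrightarrow> cdist n (sh n d a) (sh n d b) = cdist n a b"
  unfolding cdist_def using sh_diff[of n d a b] sh_diff[of n d b a] by simp

lemma sh_inv: assumes n: "n > 0" and s: "s \<in> {1..n}" shows "sh n d (sh n (-d) s) = s"
proof -
  have "int (sh n d (sh n (-d) s)) = (int (sh n (-d) s) - 1 + d) mod int n + 1"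
    by (rule sh_int[OF n])
  also have "int (sh n (-d) s) - 1 + d = (int s - 1 + - d) mod int n + d"
    by (simp only: sh_int[OF n])
  also have "((int s - 1 + - d) mod int n + d) mod int n = ((int s - 1 + - d) + d) mod int n"
    by (rule mod_add_left_eq)
  also have "(int s - 1 + - d) + d = int s - 1" by simp
  also have "(int s - 1) mod int n = int s - 1" using s by (intro mod_pos_pos_trivial) auto
  finally show ?thesis by simp
qed

lemma sh_inj: assumes n: "n > 0" and a: "a \<in> {1..n}" and b: "b \<in> {1..n}"
  and e: "sh n d a = sh n d b" shows "a = b"
proof -
  have 1: "sh n (-d) (sh n d a) = a" using sh_inv[OF n a, of "-d"] by simp
  have 2: "sh n (-d) (sh n d b) = b" using sh_inv[OF n b, of "-d"] by simp
  from 1 2 e show ?thesis by metis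
qed

lemma sh_latin:
  assumes n: "n > 0" and L: "latin_square n M"
  shows "latin_square n (\<lambda>a b. sh n d (M a b))"
proof -
  have LL: "(\<forall>a\<in>{1..n}. \<forall>s\<in>{1..n}. \<exists>!b. b \<in> {1..n} \<and> M a b = s) \<and>
     (\<forall>b\<in>{1..n}. \<forall>s\<in>{1..n}. \<exists>!a. a \<in> {1..n} \<and> M a b = s) \<and>
     (\<forall>a\<in>{1..n}. \<forall>b\<in>{1..n}. M a b \<in> {1..n})" using L unfolding latin_square_def .
  note L1 = conjunct1[OF LL] and L2 = conjunct1[OF conjunct2[OF LL]] and R = conjunct2[OF conjunct2[OF LL]]
  have key: "(sh n d (M a b) = s) = (M a b = sh n (-d) s)"
    if a: "a \<in> {1..n}" and b: "b \<in> {1..n}" and s: "s \<in> {1..n}" for a b s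
  proof
    assume h: "sh n d (M a b) = s"
    have "sh n d (M a b) = sh n d (sh n (-d) s)" using h sh_inv[OF n s, of d] by simp
    then show "M a b = sh n (-d) s"
      by (rule sh_inj[OF n R[rule_format, OF a b] sh_range[OF n, of "-d" s]])
  next
    assume "M a b = sh n (-d) s"
    then show "sh n d (M a b) = s" using sh_inv[OF n s, of d] by simp
  qed
  have C1: "\<forall>a\<in>{1..n}. \<forall>s\<in>{1..n}. \<exists>!b. b \<in> {1..n} \<and> sh n d (M a b) = s"
  proof (intro ballI)
    fix a s assume a: "a \<in> {1..n}" and s: "s \<in> {1..n}"
    have h: "\<exists>!b. b \<in> {1..n} \<and> M a b = sh n (-d) s"
      using L1[rule_format, OF a sh_range[OF n, of "-d" s]] .
    have eq: "(\<lambda>b. b \<in> {1..n} \<and> sh n d (M a b) = s) = (\<lambda>b. b \<in> {1..n} \<and> M a b = sh n (-d) s)"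
    proof (rule ext)
      fix b show "(b \<in> {1..n} \<and> sh n d (M a b) = s) = (b \<in> {1..n} \<and> M a b = sh n (-d) s)"
        using key[OF a _ s] by blast
    qed
    show "\<exists>!b. b \<in> {1..n} \<and> sh n d (M a b) = s" unfolding eq by (rule h)
  qed
  have C2: "\<forall>b\<in>{1..n}. \<forall>s\<in>{1..n}. \<exists>!a. a \<in> {1..n} \<and> sh n d (M a b) = s"
  proof (intro ballI)
    fix b s assume b: "b \<in> {1..n}" and s: "s \<in> {1..n}"
    have h: "\<exists>!a. a \<in> {1..n} \<and> M a b = sh n (-d) s"
      using L2[rule_format, OF b sh_range[OF n, of "-d" s]] .
    have eq: "(\<lambda>a. a \<in> {1..n} \<and> sh n d (M a b) = s) = (\<lambda>a. a \<in> {1..n} \<and> M a b = sh n (-d) s)"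
    proof (rule ext)
      fix a show "(a \<in> {1..n} \<and> sh n d (M a b) = s) = (a \<in> {1..n} \<and> M a b = sh n (-d) s)"
        using key[OF _ b s] by blast
    qed
    show "\<exists>!a. a \<in> {1..n} \<and> sh n d (M a b) = s" unfolding eq by (rule h)
  qed
  have C3: "\<forall>a\<in>{1..n}. \<forall>b\<in>{1..n}. sh n d (M a b) \<in> {1..n}"
    using sh_range[OF n] by blast
  show ?thesis unfolding latin_square_def by (rule conjI[OF C1 conjI[OF C2 C3]])
qed

lemma sh_inner: assumes n: "n > 0" shows "inner_distance n (\<lambda>a b. sh n d (M a b)) = inner_distance n M"
  unfolding inner_distance_def sh_cdist[OF n] ..

theorem mainTheorem11:
  fixes n k x i j :: nat
  assumes "n \<ge> 5" and "k > 0"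
    and "x \<in> {1..n}" and "i \<in> {1..n}" and "j \<in> {1..n}"
  shows "(\<exists>M. latin_square n M \<and> inner_distance n M = k) \<longleftrightarrow>
         (\<exists>M. latin_square n M \<and> inner_distance n M = k \<and> M i j = x)"
proof
  assume "\<exists>M. latin_square n M \<and> inner_distance n M = k"
  then obtain M where L: "latin_square n M" and I: "inner_distance n M = k" by blast
  have n: "n > 0" using assms by simp
  define d where "d = int x - int (M i j)"
  have Mr: "M i j \<in> {1..n}" using L assms by (simp add: latin_square_def)
  have "int (sh n d (M i j)) = (int (M i j) - 1 + d) mod int n + 1"
    by (rule sh_int[OF n])
  also have "int (M i j) - 1 + d = int x - 1" by (simp add: d_def)
  also have "(int x - 1) mod int n = int x - 1" using assms(3) by (intro mod_pos_pos_trivial) auto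
  finally have "sh n d (M i j) = x" by simp
  then show "\<exists>M. latin_square n M \<and> inner_distance n M = k \<and> M i j = x"
  proof (intro exI conjI)
    show "latin_square n (\<lambda>a b. sh n d (M a b))" by (rule sh_latin[OF n L])
    show "inner_distance n (\<lambda>a b. sh n d (M a b)) = k" using sh_inner[OF n, of d M] I by simp
    show "sh n d (M i j) = x" by fact
  qed
next
  assume "\<exists>M. latin_square n M \<and> inner_distance n M = k \<and> M i j = x"
  then show "\<exists>M. latin_square n M \<and> inner_distance n M = k" by blast
qed

end
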